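(* Let $G$ be a finite group of order $n$ and $S\subseteq G$ with $gSg^{-1}=S$ for all $g$, $S$ generating $G$, $S=S^{-1}$, $1\notin S$; put $r=\#S$ and assume $\mathrm{Cay}(G,S)$ is not a cycle graph. Let $\ell$ be a prime and $\beta:S\to\mathbb{Z}_\ell$ satisfy: $\beta(gag^{-1})=\beta(a)$; the image of $\beta$ generates $\mathbb{Z}_\ell$; $\beta(s^{-1})=-\beta(s)$; the image of $\beta$ lies in $\mathbb{Z}$; and there exist $m>0$, $(h_1,\dots,h_m)\in S^m$ with $h_1\cdots h_m\in S$ and $\beta(h_1\cdots h_m)\not\equiv\sum_i\beta(h_i)\pmod\ell$. Let $\chi_1,\chi_2\in\mathrm{Irr}(G)$ be congruent characters, i.e. $\chi_1(g)\equiv\chi_2(g)\pmod{\varpi}$ for all $g\in G$, and suppose that $d:=\chi_1(1)=\chi_2(1)$ is prime to $\ell$. Then $\mu_{\chi_1}=0$ if and only if $\mu_{\chi_2}=0$, and if these conditions hold then $\lambda_{\chi_1}=\lambda_{\chi_2}$.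
   Context: Fix $\bar{\mathbb{Q}}\hookrightarrow\bar{\mathbb{Q}}_\ell$ and a finite extension $\mathcal{K}/\mathbb{Q}_\ell$ containing all $n$-th roots of unity, with valuation ring $\mathcal{O}$ and uniformizer $\varpi$. $\mathrm{Irr}(G)$ is the set of irreducible characters $\chi:G\to\bar{\mathbb{Q}}_\ell$ (values in $\mathcal{O}$). For $\chi\in\mathrm{Irr}(G)$, $Q_\chi(T):=r\chi(1)-\sum_{t\in S}(1+T)^{\beta(t)}\chi(t)\in\mathcal{O}[[T]]$ (with $(1+T)^b$, $b\in\mathbb{Z}$, viewed in $\mathbb{Z}_\ell[[T]]$); writing $Q_\chi(T)=\varpi^{\mu}f(T)u(T)$ with $f\in\mathcal{O}[T]$ a distinguished polynomial and $u\in\mathcal{O}[[T]]^\times$, set $\mu_\chi:=\mu$ and $\lambda_\chi:=\deg f$. *)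

theory Defs
  imports "HOL-Algebra.Group" "HOL-Algebra.Generated_Groups"
    "HOL-Computational_Algebra.Formal_Power_Series"
    "HOL-Computational_Algebra.Polynomial"
    "Jordan_Normal_Form.Matrix"
begin

definition cayley_adj :: "('a, 'b) monoid_scheme \<Rightarrow> 'a set \<Rightarrow> 'a \<Rightarrow> 'a \<Rightarrow> bool" where
  "cayley_adj G S x y \<longleftrightarrow> x \<in> carrier G \<and> y \<in> carrier G \<and> (\<exists>s\<in>S. y = x \<otimes>\<^bsub>G\<^esub> s)"

definition is_cycle_graph :: "'a set \<Rightarrow> ('a \<Rightarrow> 'a \<Rightarrow> bool) \<Rightarrow> bool" where
  "is_cycle_graph V E \<longleftrightarrow>
     (\<exists>vs. distinct vs \<and> set vs = V \<and> length vs \<ge> 3 \<and>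
        (\<forall>x y. E x y \<longleftrightarrow>
           (\<exists>i<length vs. (x = vs ! i \<and> y = vs ! ((i + 1) mod length vs)) \<or>
                          (y = vs ! i \<and> x = vs ! ((i + 1) mod length vs)))))"

definition mat_trace :: "'c::comm_monoid_add mat \<Rightarrow> 'c" where
  "mat_trace A = (\<Sum>i<dim_row A. A $$ (i, i))"

definition is_rep :: "('a, 'b) monoid_scheme \<Rightarrow> nat \<Rightarrow> ('a \<Rightarrow> complex mat) \<Rightarrow> bool" where
  "is_rep G d \<rho> \<longleftrightarrow>
     (\<forall>g\<in>carrier G. \<rho> g \<in> carrier_mat d d) \<and>
     \<rho> \<one>\<^bsub>G\<^esub> = 1\<^sub>m d \<and>
     (\<forall>g\<in>carrier G. \<forall>h\<in>carrier G. \<rho> (g \<otimes>\<^bsub>G\<^esub> h) = \<rho> g * \<rho> h)"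

definition is_subspace_vec :: "nat \<Rightarrow> complex vec set \<Rightarrow> bool" where
  "is_subspace_vec d W \<longleftrightarrow> W \<subseteq> carrier_vec d \<and> 0\<^sub>v d \<in> W \<and>
     (\<forall>v\<in>W. \<forall>w\<in>W. v + w \<in> W) \<and> (\<forall>c. \<forall>v\<in>W. c \<cdot>\<^sub>v v \<in> W)"

definition is_irred_rep :: "('a, 'b) monoid_scheme \<Rightarrow> nat \<Rightarrow> ('a \<Rightarrow> complex mat) \<Rightarrow> bool" where
  "is_irred_rep G d \<rho> \<longleftrightarrow> is_rep G d \<rho> \<and> d > 0 \<and>
     (\<forall>W. is_subspace_vec d W \<and> (\<forall>g\<in>carrier G. \<forall>w\<in>W. \<rho> g *\<^sub>v w \<in> W)
          \<longrightarrow> W = {0\<^sub>v d} \<or> W = carrier_vec d)"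

(* Irr(G): characters of irreducible complex representations (values are algebraic
   integers; via the fixed embedding of Qbar into Qbar_l these are exactly Irr(G) over Qbar_l). *)
definition Irr :: "('a, 'b) monoid_scheme \<Rightarrow> ('a \<Rightarrow> complex) set" where
  "Irr G = {\<chi>. \<exists>d \<rho>. is_irred_rep G d \<rho> \<and>
               \<chi> = (\<lambda>g. if g \<in> carrier G then mat_trace (\<rho> g) else 0)}"

(* A is the valuation ring of the l-adic valuation on Qbar (a subfield of C) induced by
   an embedding Qbar -> Qbar_l: A = {x in Qbar. |x|_l <= 1}.  These are exactly the
   valuation rings of Qbar in which l is not a unit. *)
definition l_adic_valring :: "nat \<Rightarrow> complex set \<Rightarrow> bool" where
  "l_adic_valring l A \<longleftrightarrow>
     A \<subseteq> {x. algebraic x} \<and> 0 \<in> A \<and> 1 \<in> A \<and>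
     (\<forall>x\<in>A. \<forall>y\<in>A. x + y \<in> A \<and> x - y \<in> A \<and> x * y \<in> A) \<and>
     (\<forall>x. algebraic x \<and> x \<noteq> 0 \<longrightarrow> x \<in> A \<or> inverse x \<in> A) \<and>
     inverse (of_nat l) \<notin> A"

(* maximal ideal (generated by the uniformizer varpi) *)
definition max_ideal :: "complex set \<Rightarrow> complex set" where
  "max_ideal A = {x\<in>A. x = 0 \<or> inverse x \<notin> A}"

(* Q_chi(T) = r chi(1) - sum_{t in S} (1+T)^{beta t} chi(t);
   (1+T)^b = fps_binomial b = sum_k (b gchoose k) T^k, valid for all b in Z. *)
definition Q_series :: "('a, 'b) monoid_scheme \<Rightarrow> 'a set \<Rightarrow> ('a \<Rightarrow> int) \<Rightarrow> ('a \<Rightarrow> complex) \<Rightarrow> complex fps" where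
  "Q_series G S \<beta> \<chi> =
     fps_const (of_nat (card S) * \<chi> \<one>\<^bsub>G\<^esub>) -
     (\<Sum>t\<in>S. fps_const (\<chi> t) * fps_binomial (of_int (\<beta> t)))"

(* Writing Q = varpi^mu f u (Weierstrass preparation in O[[T]]):
   mu = 0 iff some coefficient of Q is a unit of O;
   lambda = deg f = least index k at which the coefficient of Q has minimal valuation,
   i.e. Q_k is nonzero and divides every coefficient of Q in O. *)
definition mu_is_zero :: "complex set \<Rightarrow> complex fps \<Rightarrow> bool" where
  "mu_is_zero A Q \<longleftrightarrow> (\<exists>k. fps_nth Q k \<in> A - max_ideal A)"

definition lambda_inv :: "complex set \<Rightarrow> complex fps \<Rightarrow> nat" where
  "lambda_inv A Q = (LEAST k. fps_nth Q k \<noteq> 0 \<and> (\<forall>j. fps_nth Q j / fps_nth Q k \<in> A))"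

end

theory Submission imports Defs "Jordan_Normal_Form.Schur_Decomposition" "HOL-Algebra.Multiplicative_Group" "HOL.Binomial_Plus" begin

lemma mat_trace_comm:
  fixes X Y :: "'c::comm_ring_1 mat"
  assumes "X \<in> carrier_mat n n" "Y \<in> carrier_mat n n"
  shows "mat_trace (X * Y) = mat_trace (Y * X)"
proof -
  have "mat_trace (X * Y) = (\<Sum>i<n. \<Sum>k<n. X $$ (i,k) * Y $$ (k,i))"
    using assms by (simp add: mat_trace_def scalar_prod_def atLeast0LessThan)
  also have "\<dots> = (\<Sum>k<n. \<Sum>i<n. Y $$ (k,i) * X $$ (i,k))"
    by (subst sum.swap) (simp add: mult.commute)
  also have "\<dots> = mat_trace (Y * X)"
    using assms by (simp add: mat_trace_def scalar_prod_def atLeast0LessThan)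
  finally show ?thesis .
qed

lemma eigen_root_unity:
  fixes M :: "complex mat"
  assumes M: "M \<in> carrier_mat n n" and MN: "M ^\<^sub>m N = 1\<^sub>m n" and ev: "eigenvalue M k"
  shows "k ^ N = 1"
proof -
  obtain v where v: "eigenvector M v k" using ev unfolding eigenvalue_def by auto
  have p: "M ^\<^sub>m N *\<^sub>v v = k^N \<cdot>\<^sub>v v" by (rule eigenvector_pow[OF M v])
  have vc: "v \<in> carrier_vec n" "v \<noteq> 0\<^sub>v n" using v M unfolding eigenvector_def by auto
  then obtain i where i: "i < n" "v $ i \<noteq> 0" by (metis eq_vecI carrier_vecD index_zero_vec)
  have "v = k^N \<cdot>\<^sub>v v" using p MN vc by simp
  hence "v $ i = k^N * v $ i" using i vc by (metis index_smult_vec(1) carrier_vecD)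
  thus ?thesis using i by simp
qed

lemma trace_in_set:
  fixes M :: "complex mat" and A :: "complex set"
  assumes M: "M \<in> carrier_mat n n" and MN: "M ^\<^sub>m N = 1\<^sub>m n"
    and roots: "\<And>z. z ^ N = 1 \<Longrightarrow> z \<in> A"
    and zero: "0 \<in> A" and add: "\<And>x y. x \<in> A \<Longrightarrow> y \<in> A \<Longrightarrow> x + y \<in> A"
  shows "mat_trace M \<in> A"
proof -
  obtain es where es: "char_poly M = (\<Prod> a \<leftarrow> es. [:- a, 1:])" using char_poly_factorized[OF M] by auto
  obtain B where B: "B \<in> carrier_mat n n" "upper_triangular B" "similar_mat M B"
    using schur_decomposition_exists[OF M es] by auto
  obtain P Q where w: "similar_mat_wit M B P Q" using B(3) unfolding similar_mat_def by auto
  have PQ: "P \<in> carrier_mat n n" "Q \<in> carrier_mat n n" "Q * P = 1\<^sub>m n" "M = P * B * Q"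
    using w M unfolding similar_mat_wit_def Let_def by auto
  have "mat_trace M = mat_trace (P * (B * Q))" using PQ B by (simp add: assoc_mult_mat[of _ n n _ n _ n])
  also have "\<dots> = mat_trace ((B * Q) * P)" using PQ B by (intro mat_trace_comm) auto
  also have "\<dots> = mat_trace B" using PQ B by (simp add: assoc_mult_mat[of _ n n _ n _ n])
  finally have tr: "mat_trace M = mat_trace B" .
  have cpB: "char_poly B = (\<Prod> a \<leftarrow> diag_mat B. [:- a, 1:])" by (rule char_poly_upper_triangular[OF B(1,2)])
  have cpM: "char_poly M = char_poly B" by (rule char_poly_similar[OF B(3)])
  have diagA: "B $$ (i,i) \<in> A" if i: "i < n" for i
  proof -
    have "B $$ (i,i) \<in> set (diag_mat B)" using i B(1) unfolding diag_mat_def by auto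
    hence "poly (char_poly B) (B $$ (i,i)) = 0" unfolding cpB
      by (auto simp: poly_prod_list prod_list_zero_iff)
    hence "eigenvalue M (B $$ (i,i))" using cpM eigenvalue_root_char_poly[OF M] by simp
    hence "B $$ (i,i) ^ N = 1" by (rule eigen_root_unity[OF M MN])
    thus ?thesis by (rule roots)
  qed
  have "(\<Sum>i\<in>I. B $$ (i,i)) \<in> A" if "finite I" "I \<subseteq> {..<n}" for I
    using that by (induction I rule: finite_induct) (auto intro: zero add diagA)
  hence "mat_trace B \<in> A" using B(1) unfolding mat_trace_def by auto
  thus ?thesis using tr by simp
qed

lemma vr_basic:
  assumes vr: "l_adic_valring l A"
  shows "0 \<in> A" "1 \<in> A" "\<And>x y. x \<in> A \<Longrightarrow> y \<in> A \<Longrightarrow> x + y \<in> A"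
    "\<And>x y. x \<in> A \<Longrightarrow> y \<in> A \<Longrightarrow> x - y \<in> A"
    "\<And>x y. x \<in> A \<Longrightarrow> y \<in> A \<Longrightarrow> x * y \<in> A"
    "\<And>x. x \<in> A \<Longrightarrow> algebraic x"
    "\<And>x. algebraic x \<Longrightarrow> x \<noteq> 0 \<Longrightarrow> x \<in> A \<or> inverse x \<in> A"
  using vr unfolding l_adic_valring_def by auto

lemma vr_neg: assumes vr: "l_adic_valring l A" and x: "x \<in> A" shows "- x \<in> A"
  using vr_basic(4)[OF vr vr_basic(1)[OF vr] x] by simp

lemma vr_of_nat: assumes vr: "l_adic_valring l A" shows "of_nat n \<in> A"
  by (induction n) (auto intro: vr_basic[OF vr])

lemma vr_of_int: assumes vr: "l_adic_valring l A" shows "of_int c \<in> A"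
proof (cases "c \<ge> 0")
  case True
  then show ?thesis using vr_of_nat[OF vr, of "nat c"] by simp
next
  case False
  then show ?thesis using vr_neg[OF vr vr_of_nat[OF vr, of "nat (-c)"]] by simp
qed

lemma vr_sum: assumes vr: "l_adic_valring l A" and "finite I" and "\<And>i. i \<in> I \<Longrightarrow> f i \<in> A"
  shows "(\<Sum>i\<in>I. f i) \<in> A"
  using assms(2,3) by (induction I rule: finite_induct) (auto intro: vr_basic[OF vr])

lemma vr_pow: assumes vr: "l_adic_valring l A" and w: "w \<in> A" shows "w ^ k \<in> A"
  by (induction k) (auto intro: vr_basic[OF vr] w)

lemma vr_root: assumes vr: "l_adic_valring l A" and z: "z ^ N = 1" and N: "N > 0"
  shows "z \<in> A"
proof -
  have alg: "algebraic z"
    by (rule algebraic_root[of 1 "Polynomial.monom 1 N"]) (use z N in \<open>auto simp: poly_monom coeff_monom degree_monom_eq\<close>)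
  have z0: "z \<noteq> 0" using z N by (metis power_0_left zero_neq_one not_gr_zero)
  show ?thesis
  proof (rule ccontr)
    assume "z \<notin> A"
    hence iz: "inverse z \<in> A" using vr_basic(7)[OF vr alg z0] by auto
    have "(inverse z) ^ (N - 1) \<in> A"
      using vr_pow[OF vr iz] .
    moreover have "(inverse z) ^ (N - 1) = z"
    proof -
      have "z ^ (N - 1) * z = 1" using z N by (metis power_minus_mult)
      thus ?thesis using z0 by (simp add: power_inverse field_simps)
    qed
    ultimately show False using \<open>z \<notin> A\<close> by simp
  qed
qed

lemma vr_m_ideal: assumes vr: "l_adic_valring l A" and a: "a \<in> A" and x: "x \<in> max_ideal A"
  shows "a * x \<in> max_ideal A"
proof -
  have xA: "x \<in> A" and xc: "x = 0 \<or> inverse x \<notin> A" using x unfolding max_ideal_def by auto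
  have "a * x \<in> A" using vr_basic(5)[OF vr a xA] .
  moreover have "a * x = 0 \<or> inverse (a * x) \<notin> A"
  proof (cases "a * x = 0")
    case False
    hence "x \<noteq> 0" "a \<noteq> 0" by auto
    have "inverse (a * x) \<notin> A"
    proof
      assume "inverse (a * x) \<in> A"
      hence "a * inverse (a * x) \<in> A" using vr_basic(5)[OF vr a] by auto
      moreover have "a * inverse (a * x) = inverse x" using \<open>a \<noteq> 0\<close> by (simp add: inverse_mult_distrib mult.assoc[symmetric])
      ultimately show False using xc \<open>x \<noteq> 0\<close> by metis
    qed
    thus ?thesis by simp
  qed simp
  ultimately show ?thesis unfolding max_ideal_def by auto
qed

lemma vr_m_sub: "max_ideal A \<subseteq> A" unfolding max_ideal_def by auto

lemma vr_m_zero: assumes vr: "l_adic_valring l A" shows "0 \<in> max_ideal A"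
  using vr_basic(1)[OF vr] unfolding max_ideal_def by auto

lemma vr_m_neg: assumes vr: "l_adic_valring l A" and x: "x \<in> max_ideal A" shows "- x \<in> max_ideal A"
  using vr_m_ideal[OF vr vr_of_int[OF vr, of "-1"] x] by simp

lemma vr_m_one: assumes vr: "l_adic_valring l A" shows "1 \<notin> max_ideal A"
  using vr_basic(2)[OF vr] unfolding max_ideal_def by auto

lemma vr_m_add: assumes vr: "l_adic_valring l A" and x: "x \<in> max_ideal A" and y: "y \<in> max_ideal A"
  shows "x + y \<in> max_ideal A"
proof (rule ccontr)
  assume nm: "x + y \<notin> max_ideal A"
  have sA: "x + y \<in> A" using x y vr_m_sub vr_basic(3)[OF vr] by blast
  hence s0: "x + y \<noteq> 0" and isA: "inverse (x + y) \<in> A" using nm unfolding max_ideal_def by auto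
  define a where "a = inverse (x + y) * x"
  define b where "b = inverse (x + y) * y"
  have am: "a \<in> max_ideal A" unfolding a_def by (rule vr_m_ideal[OF vr isA x])
  have bm: "b \<in> max_ideal A" unfolding b_def by (rule vr_m_ideal[OF vr isA y])
  have ab: "a + b = 1" unfolding a_def b_def distrib_left[symmetric] using s0 by simp
  have a0: "a \<noteq> 0" using ab bm vr_m_one[OF vr] by auto
  have b0: "b \<noteq> 0" using ab am vr_m_one[OF vr] by auto
  have ia: "inverse a \<notin> A" using am a0 unfolding max_ideal_def by auto
  have ib: "inverse b \<notin> A" using bm b0 unfolding max_ideal_def by auto
  have aA: "a \<in> A" using am vr_m_sub by blast
  define c where "c = inverse a - 1"
  have algc: "algebraic c"
    by (rule algebraic_root[of "inverse a" "[:1,1:]"])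
       (use vr_basic(6)[OF vr aA] in \<open>auto simp: c_def coeff_pCons split: nat.splits\<close>)
  have c0: "c \<noteq> 0" using ia vr_basic(2)[OF vr] unfolding c_def by auto
  show False
    using vr_basic(7)[OF vr algc c0]
  proof
    assume "c \<in> A"
    hence "c + 1 \<in> A" using vr_basic(3,2)[OF vr] by auto
    thus False using ia unfolding c_def by simp
  next
    assume "inverse c \<in> A"
    hence "inverse c + 1 \<in> A" using vr_basic(3,2)[OF vr] by auto
    moreover have "inverse c + 1 = inverse b"
    proof -
      have b1: "b = 1 - a" by (metis ab add_diff_cancel_left')
      have "1 - a \<noteq> 0" using b0 b1 by simp
      thus ?thesis unfolding c_def b1 using a0 by (simp add: field_simps)
    qed
    ultimately show False using ib by simp
  qed
qed

lemma vr_m_sum: assumes vr: "l_adic_valring l A" and "finite I" and "\<And>i. i \<in> I \<Longrightarrow> f i \<in> max_ideal A"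
  shows "(\<Sum>i\<in>I. f i) \<in> max_ideal A"
  using assms(2,3) by (induction I rule: finite_induct) (auto intro: vr_m_add[OF vr] vr_m_zero[OF vr])

lemma vr_unit_add: assumes vr: "l_adic_valring l A" and u: "u \<in> A - max_ideal A" and e: "e \<in> max_ideal A"
  shows "u + e \<in> A - max_ideal A"
proof -
  have "u + e \<in> A" using u e vr_m_sub vr_basic(3)[OF vr] by blast
  moreover have "u + e \<notin> max_ideal A"
  proof
    assume "u + e \<in> max_ideal A"
    hence "(u + e) + - e \<in> max_ideal A" using vr_m_add[OF vr _ vr_m_neg[OF vr e]] by blast
    thus False using u by simp
  qed
  ultimately show ?thesis by simp
qed

lemma rep_pow:
  assumes grp: "group G" and rep: "is_rep G d \<rho>" and g: "g \<in> carrier G"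
  shows "\<rho> (g [^]\<^bsub>G\<^esub> (k::nat)) = \<rho> g ^\<^sub>m k"
proof (induction k)
  case 0
  have "\<rho> g \<in> carrier_mat d d" using rep g unfolding is_rep_def by auto
  then show ?case using rep unfolding is_rep_def by simp
next
  case (Suc k)
  have "\<rho> (g [^]\<^bsub>G\<^esub> Suc k) = \<rho> (g [^]\<^bsub>G\<^esub> k \<otimes>\<^bsub>G\<^esub> g)"
    by (simp add: group.is_monoid[OF grp] monoid.nat_pow_Suc)
  also have "\<dots> = \<rho> (g [^]\<^bsub>G\<^esub> k) * \<rho> g"
    using rep g grp unfolding is_rep_def by (simp add: group.is_monoid monoid.nat_pow_closed)
  finally show ?case using Suc by simp
qed

lemma char_in_A:
  assumes grp: "group G" and fin: "finite (carrier G)" and vr: "l_adic_valring l A"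
    and chi: "\<chi> \<in> Irr G" and g: "g \<in> carrier G"
  shows "\<chi> g \<in> A"
proof -
  obtain d \<rho> where ir: "is_irred_rep G d \<rho>" and chieq: "\<chi> = (\<lambda>g. if g \<in> carrier G then mat_trace (\<rho> g) else 0)"
    using chi unfolding Irr_def by auto
  have rep: "is_rep G d \<rho>" using ir unfolding is_irred_rep_def by auto
  define N where "N = Coset.order G"
  have N: "N > 0" unfolding N_def using fin monoid.order_gt_0_iff_finite[OF group.is_monoid[OF grp]] by simp
  have M: "\<rho> g \<in> carrier_mat d d" using rep g unfolding is_rep_def by auto
  have "\<rho> g ^\<^sub>m N = \<rho> (g [^]\<^bsub>G\<^esub> N)" using rep_pow[OF grp rep g] by simp
  also have "\<dots> = \<rho> \<one>\<^bsub>G\<^esub>" unfolding N_def using group.pow_order_eq_1[OF grp g] by simp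
  also have "\<dots> = 1\<^sub>m d" using rep unfolding is_rep_def by simp
  finally have MN: "\<rho> g ^\<^sub>m N = 1\<^sub>m d" .
  have "mat_trace (\<rho> g) \<in> A"
    by (rule trace_in_set[OF M MN]) (auto intro: vr_root[OF vr _ N] vr_basic[OF vr])
  thus ?thesis using g chieq by simp
qed

lemma Q_nth:
  assumes "finite S"
  shows "fps_nth (Q_series G S \<beta> \<chi>) k =
    (if k = 0 then of_nat (card S) * \<chi> \<one>\<^bsub>G\<^esub> else 0) - (\<Sum>t\<in>S. \<chi> t * ((of_int (\<beta> t) :: complex) gchoose k))"
  unfolding Q_series_def by (simp add: fps_sum_nth)

lemma vr_gbin: assumes vr: "l_adic_valring l A" shows "(of_int b :: complex) gchoose k \<in> A"
  by (subst of_int_gbinomial[symmetric]) (rule vr_of_int[OF vr])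

lemma lam_char:
  assumes vr: "l_adic_valring l A" and allA: "\<And>j. fps_nth Q j \<in> A"
    and k0: "fps_nth Q k0 \<in> A - max_ideal A"
  shows "(fps_nth Q k \<noteq> 0 \<and> (\<forall>j. fps_nth Q j / fps_nth Q k \<in> A)) \<longleftrightarrow> fps_nth Q k \<in> A - max_ideal A"
proof
  assume h: "fps_nth Q k \<noteq> 0 \<and> (\<forall>j. fps_nth Q j / fps_nth Q k \<in> A)"
  have q0: "fps_nth Q k0 \<noteq> 0" and iq0: "inverse (fps_nth Q k0) \<in> A" using k0 unfolding max_ideal_def by auto
  have "inverse (fps_nth Q k) = (fps_nth Q k0 / fps_nth Q k) * inverse (fps_nth Q k0)"
    using q0 h by (simp add: field_simps)
  also have "\<dots> \<in> A" using h iq0 vr_basic(5)[OF vr] by blast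
  finally show "fps_nth Q k \<in> A - max_ideal A" using h allA[of k] unfolding max_ideal_def by auto
next
  assume h: "fps_nth Q k \<in> A - max_ideal A"
  hence q: "fps_nth Q k \<noteq> 0" "inverse (fps_nth Q k) \<in> A" unfolding max_ideal_def by auto
  have "fps_nth Q j / fps_nth Q k \<in> A" for j
    using vr_basic(5)[OF vr allA[of j] q(2)] by (simp add: divide_inverse)
  thus "fps_nth Q k \<noteq> 0 \<and> (\<forall>j. fps_nth Q j / fps_nth Q k \<in> A)" using q by auto
qed

theorem proposition3p8:
  fixes G :: "('a, 'b) monoid_scheme" and S :: "'a set" and l :: nat
    and \<beta> :: "'a \<Rightarrow> int" and A :: "complex set"
    and \<chi>1 \<chi>2 :: "'a \<Rightarrow> complex" and d :: nat
  assumes grp: "group G" and fin: "finite (carrier G)"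
    and S_sub: "S \<subseteq> carrier G"
    and S_conj: "\<forall>g\<in>carrier G. (\<lambda>s. g \<otimes>\<^bsub>G\<^esub> s \<otimes>\<^bsub>G\<^esub> inv\<^bsub>G\<^esub> g) ` S = S"
    and S_gen: "generate G S = carrier G"
    and S_inv: "\<forall>s\<in>S. inv\<^bsub>G\<^esub> s \<in> S"
    and S_one: "\<one>\<^bsub>G\<^esub> \<notin> S"
    and not_cycle: "\<not> is_cycle_graph (carrier G) (cayley_adj G S)"
    and l_prime: "prime l"
    and beta_conj: "\<forall>g\<in>carrier G. \<forall>a\<in>S. \<beta> (g \<otimes>\<^bsub>G\<^esub> a \<otimes>\<^bsub>G\<^esub> inv\<^bsub>G\<^esub> g) = \<beta> a"
    and beta_gen: "\<exists>s\<in>S. \<not> int l dvd \<beta> s"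
    and beta_inv: "\<forall>s\<in>S. \<beta> (inv\<^bsub>G\<^esub> s) = - \<beta> s"
    and beta_nonhom: "\<exists>hs. length hs > 0 \<and> set hs \<subseteq> S \<and>
                        foldr (\<otimes>\<^bsub>G\<^esub>) hs \<one>\<^bsub>G\<^esub> \<in> S \<and>
                        \<not> (int l dvd (\<beta> (foldr (\<otimes>\<^bsub>G\<^esub>) hs \<one>\<^bsub>G\<^esub>) - sum_list (map \<beta> hs)))"
    and emb: "l_adic_valring l A"
    and chi1: "\<chi>1 \<in> Irr G" and chi2: "\<chi>2 \<in> Irr G"
    and cong: "\<forall>g\<in>carrier G. \<chi>1 g - \<chi>2 g \<in> max_ideal A"
    and deg1: "\<chi>1 \<one>\<^bsub>G\<^esub> = of_nat d" and deg2: "\<chi>2 \<one>\<^bsub>G\<^esub> = of_nat d"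
    and d_coprime: "\<not> l dvd d"
  shows "(mu_is_zero A (Q_series G S \<beta> \<chi>1) \<longleftrightarrow> mu_is_zero A (Q_series G S \<beta> \<chi>2)) \<and>
         (mu_is_zero A (Q_series G S \<beta> \<chi>1) \<longrightarrow>
            lambda_inv A (Q_series G S \<beta> \<chi>1) = lambda_inv A (Q_series G S \<beta> \<chi>2))"
proof -
  have finS: "finite S" using finite_subset[OF S_sub fin] .
  define Q1 where "Q1 = Q_series G S \<beta> \<chi>1"
  define Q2 where "Q2 = Q_series G S \<beta> \<chi>2"
  define c where "c = (\<lambda>t k. (of_int (\<beta> t) :: complex) gchoose k)"
  have cA: "c t k \<in> A" for t k unfolding c_def by (rule vr_gbin[OF emb])
  have one: "\<one>\<^bsub>G\<^esub> \<in> carrier G" using group.is_monoid[OF grp] monoid.one_closed by blast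
  have chiA: "\<chi>1 t \<in> A" if "t \<in> carrier G" for t using char_in_A[OF grp fin emb chi1 that] .
  have q1: "fps_nth Q1 k = (if k = 0 then of_nat (card S) * of_nat d else 0) - (\<Sum>t\<in>S. \<chi>1 t * c t k)" for k
    unfolding Q1_def c_def Q_nth[OF finS] deg1 ..
  have q2: "fps_nth Q2 k = (if k = 0 then of_nat (card S) * of_nat d else 0) - (\<Sum>t\<in>S. \<chi>2 t * c t k)" for k
    unfolding Q2_def c_def Q_nth[OF finS] deg2 ..
  have Q1A: "fps_nth Q1 k \<in> A" for k
  proof -
    have "(if k = 0 then of_nat (card S) * of_nat d else 0) \<in> A"
      using vr_of_nat[OF emb, of "card S * d"] vr_basic(1)[OF emb] by auto
    moreover have "(\<Sum>t\<in>S. \<chi>1 t * c t k) \<in> A"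
      by (rule vr_sum[OF emb finS]) (use chiA S_sub cA vr_basic(5)[OF emb] in blast)
    ultimately show ?thesis unfolding q1 using vr_basic(4)[OF emb] by blast
  qed
  have Dm: "fps_nth Q2 k - fps_nth Q1 k \<in> max_ideal A" for k
  proof -
    have "fps_nth Q2 k - fps_nth Q1 k = (\<Sum>t\<in>S. c t k * (\<chi>1 t - \<chi>2 t))"
      unfolding q1 q2 by (simp add: sum_subtractf[symmetric] algebra_simps)
    also have "\<dots> \<in> max_ideal A"
      by (rule vr_m_sum[OF emb finS]) (use vr_m_ideal[OF emb cA] cong S_sub in blast)
    finally show ?thesis .
  qed
  have Q2A: "fps_nth Q2 k \<in> A" for k
  proof -
    have "fps_nth Q1 k + (fps_nth Q2 k - fps_nth Q1 k) \<in> A"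
      using Q1A Dm vr_m_sub vr_basic(3)[OF emb] by blast
    thus ?thesis by simp
  qed
  have U: "fps_nth Q1 k \<in> A - max_ideal A \<longleftrightarrow> fps_nth Q2 k \<in> A - max_ideal A" for k
  proof
    assume "fps_nth Q1 k \<in> A - max_ideal A"
    from vr_unit_add[OF emb this Dm[of k]] show "fps_nth Q2 k \<in> A - max_ideal A" by simp
  next
    assume "fps_nth Q2 k \<in> A - max_ideal A"
    from vr_unit_add[OF emb this vr_m_neg[OF emb Dm[of k]]] show "fps_nth Q1 k \<in> A - max_ideal A" by simp
  qed
  have mu: "mu_is_zero A Q1 \<longleftrightarrow> mu_is_zero A Q2" unfolding mu_is_zero_def using U by blast
  have lam: "lambda_inv A Q1 = lambda_inv A Q2" if m1: "mu_is_zero A Q1"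
  proof -
    obtain k0 where k0: "fps_nth Q1 k0 \<in> A - max_ideal A" using m1 unfolding mu_is_zero_def by auto
    have k0': "fps_nth Q2 k0 \<in> A - max_ideal A" using k0 U by blast
    have "(fps_nth Q1 k \<noteq> 0 \<and> (\<forall>j. fps_nth Q1 j / fps_nth Q1 k \<in> A)) \<longleftrightarrow>
          (fps_nth Q2 k \<noteq> 0 \<and> (\<forall>j. fps_nth Q2 j / fps_nth Q2 k \<in> A))" for k
      using lam_char[OF emb Q1A k0, of k] lam_char[OF emb Q2A k0', of k] U[of k] by blast
    thus ?thesis unfolding lambda_inv_def by simp
  qed
  show ?thesis using mu lam unfolding Q1_def Q2_def by blast
qed

end
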